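(* Let $\mu$ be an odd positive integer. Then there exists a cyclic DCA$(4,6\mu+5;6\mu+4)$ satisfying P1 and P2.
   Context: Let $(G,+)$ be an abelian group of order $n$. A difference covering array DCA$(k,\eta;n)$ over $G$ is an $\eta\times k$ matrix $Q=[q(i,j)]$ (rows indexed $0,\dots,\eta-1$, columns $0,\dots,k-1$) with entries in $G$ such that for every pair of distinct columns $j,j'$ the multiset $\{q(i,j)-q(i,j') : 0\le i\le \eta-1\}$ contains every element of $G$ at least once. It is cyclic if $G=\mathbb{Z}_n$. A DCA$(k,n+1;n)$ is taken in normalized form: all entries of its last row (row $n$) and of its last column (column $k-1$) equal $0$. Such a DCA satisfies P1 if $0$ occurs at least twice in every column, and satisfies P2 if for all distinct columns $j,j'$ with $j\neq k-1\neq j'$, the set $\{q(i,j)-q(i,j') : 0\le i\le n-1\}$ equals $G\setminus\{0\}$. *)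

theory Defs
  imports Main
begin

text \<open>Elements of Z_n are represented by
  integers in {0..<n}; subtraction in Z_n is integer subtraction followed by mod n.
  A matrix is a function Q :: nat => nat => int, Q i j = entry in row i, column j,
  rows 0..eta-1, columns 0..k-1.\<close>

definition cyclic_DCA :: "nat \<Rightarrow> nat \<Rightarrow> nat \<Rightarrow> (nat \<Rightarrow> nat \<Rightarrow> int) \<Rightarrow> bool" where
  "cyclic_DCA k eta n Q \<longleftrightarrow>
     (\<forall>i<eta. \<forall>j<k. 0 \<le> Q i j \<and> Q i j < int n) \<and>
     (\<forall>j<k. \<forall>j'<k. j \<noteq> j' \<longrightarrow>
        (\<forall>g\<in>{0..<int n}. \<exists>i<eta. (Q i j - Q i j') mod int n = g))"

definition DCA_normalized :: "nat \<Rightarrow> nat \<Rightarrow> (nat \<Rightarrow> nat \<Rightarrow> int) \<Rightarrow> bool" where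
  "DCA_normalized k n Q \<longleftrightarrow> (\<forall>j<k. Q n j = 0) \<and> (\<forall>i<n+1. Q i (k-1) = 0)"

definition DCA_P1 :: "nat \<Rightarrow> nat \<Rightarrow> (nat \<Rightarrow> nat \<Rightarrow> int) \<Rightarrow> bool" where
  "DCA_P1 k n Q \<longleftrightarrow> (\<forall>j<k. card {i. i < n+1 \<and> Q i j = 0} \<ge> 2)"

definition DCA_P2 :: "nat \<Rightarrow> nat \<Rightarrow> (nat \<Rightarrow> nat \<Rightarrow> int) \<Rightarrow> bool" where
  "DCA_P2 k n Q \<longleftrightarrow> (\<forall>j<k. \<forall>j'<k. j \<noteq> j' \<and> j \<noteq> k-1 \<and> j' \<noteq> k-1 \<longrightarrow>
      (\<lambda>i. (Q i j - Q i j') mod int n) ` {0..<n} = {1..<int n})"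

end

theory Submission
  imports Defs
begin


definition beta :: "int \<Rightarrow> int \<Rightarrow> int \<Rightarrow> int" where
  "beta m s u = (if even u \<and> (s = 0 \<or> u \<noteq> m - 1) then 1 else 0)"

definition gam :: "int \<Rightarrow> int \<Rightarrow> int \<Rightarrow> int" where
  "gam mu s u = (if s = 0 then (if even u = (mu \<le> u \<and> u \<le> 2*mu) then 0 else 1)
     else (if u = 3*mu+1 then 1 else (if odd u = (mu \<le> u \<and> u \<le> 2*mu - 1) then 0 else 1)))"

definition zc :: "int \<Rightarrow> nat \<Rightarrow> int \<Rightarrow> int \<Rightarrow> int" where
  "zc mu j s u = (if j = 0 then s else if j = 1 then beta (3*mu+2) s u else gam mu s u)"

definition wc :: "int \<Rightarrow> nat \<Rightarrow> int \<Rightarrow> int \<Rightarrow> int" where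
  "wc mu j s u = (if j = 0 then u else if j = 1 then (2*u+2*s) mod (3*mu+2)
     else (3*u+mu+2+2*s) mod (3*mu+2))"

lemma mod_via_dvd:
  fixes x d m :: int
  assumes "0 \<le> d" "d < m" "m dvd (x - d)"
  shows "x mod m = d"
proof -
  have "x mod m = d mod m" using assms(3) by (simp add: mod_eq_dvd_iff)
  thus ?thesis using assms(1,2) by simp
qed

lemma dvd_range3:
  fixes x m :: int
  assumes "m > 0" "m dvd x" "0 \<le> x" "x < 3*m"
  shows "x = 0 \<or> x = m \<or> x = 2*m"
proof -
  obtain k where k: "x = m * k" using assms(2) by (auto simp: dvd_def)
  have "k \<ge> 0" using k assms(1,3) by (simp add: zero_le_mult_iff)
  moreover have "k < 3" using k assms(1,4)
    by (metis mult.commute mult_less_cancel_left_pos)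
  ultimately have "k = 0 \<or> k = 1 \<or> k = 2" by auto
  thus ?thesis using k by auto
qed

lemma negdvd: "(m::int) dvd y \<Longrightarrow> y = - x \<Longrightarrow> m dvd x" by simp

lemma beta01: "beta m s u \<in> {0,1}" by (simp add: beta_def)
lemma gam01: "gam mu s u \<in> {0,1}" by (simp add: gam_def)

context
  fixes mu m :: int
  assumes mu_odd: "odd mu" and mu_pos: "mu > 0" and m_def: "m = 3*mu+2"
begin

lemma m_pos: "m > 0" using mu_pos m_def by simp
lemma m_odd: "odd m" using mu_odd m_def by simp

lemma colsurj1:
  assumes "z \<in> {0,1}" "0 \<le> d" "d < m"
  shows "\<exists>s\<in>{0,1}. \<exists>u. 0 \<le> u \<and> u < m \<and> beta m s u = z \<and> (2*u+2*s) mod m = d"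
proof -
  have "\<exists>u0. 0 \<le> u0 \<and> u0 < m \<and> (2*u0 - d = 0 \<or> 2*u0 - d = m)"
  proof (cases "even d")
    case True thus ?thesis using assms by (intro exI[of _ "d div 2"]) auto
  next
    case False
    hence "even (d + m)" using m_odd by simp
    thus ?thesis using assms by (intro exI[of _ "(d + m) div 2"]) auto
  qed
  then obtain u0 where r0: "0 \<le> u0" "u0 < m" and e0: "2*u0 - d = 0 \<or> 2*u0 - d = m" by blast
  have A: "m dvd (2*u0 - d)" using e0 by auto
  have m0: "(2*u0 + 2*0) mod m = d"
    by (rule mod_via_dvd) (use assms A in auto)
  define u1 where "u1 = (if u0 = 0 then m - 1 else u0 - 1)"
  have r1: "0 \<le> u1" "u1 < m" using r0 m_pos unfolding u1_def by auto
  have e1: "2*u1 + 2*1 - d = (2*u0 - d) + m * (if u0 = 0 then 2 else 0)"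
    unfolding u1_def by auto
  have m1: "(2*u1 + 2*1) mod m = d"
  proof (rule mod_via_dvd)
    show "m dvd (2*u1 + 2*1 - d)" unfolding e1 using A by auto
  qed (use assms in auto)
  have bd: "beta m 0 u0 \<noteq> beta m 1 u1"
    using r0 m_odd unfolding beta_def u1_def by auto
  show ?thesis
  proof (cases "z = beta m 0 u0")
    case True thus ?thesis using r0 m0 by (intro bexI[of _ 0]) auto
  next
    case False
    hence "z = beta m 1 u1" using bd assms(1) beta01[of m 0 u0] beta01[of m 1 u1] by auto
    thus ?thesis using r1 m1 by (intro bexI[of _ 1]) auto
  qed
qed

lemma colsurj2:
  assumes "z \<in> {0,1}" "0 \<le> d" "d < m"
  shows "\<exists>s\<in>{0,1}. \<exists>u. 0 \<le> u \<and> u < m \<and> gam mu s u = z \<and> (3*u+mu+2+2*s) mod m = d"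
proof -
  define y where "y = (d - mu - 2) * (mu + 1)"
  define u0 where "u0 = y mod m"
  have r0: "0 \<le> u0" "u0 < m" using m_pos unfolding u0_def by auto
  have q: "u0 = y - y div m * m" unfolding u0_def using div_mult_mod_eq[of y m] by linarith
  have e0: "3*u0 + mu + 2 + 2*0 - d = m * ((d - mu - 2) - 3 * (y div m))"
    unfolding q y_def m_def by (simp add: algebra_simps)
  have m0: "(3*u0 + mu + 2 + 2*0) mod m = d"
    by (rule mod_via_dvd) (use assms e0 in auto)
  define u1 where "u1 = (if u0 + mu < m then u0 + mu else u0 + mu - m)"
  have r1: "0 \<le> u1" "u1 < m" using r0 mu_pos m_def unfolding u1_def by auto
  have e1: "3*u1 + mu + 2 + 2*1 - d = m * ((d - mu - 2) - 3 * (y div m) + (if u0 + mu < m then 1 else -2))"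
    using e0 m_def unfolding u1_def by (auto simp: algebra_simps)
  have m1: "(3*u1 + mu + 2 + 2*1) mod m = d"
    by (rule mod_via_dvd) (use assms e1 in auto)
  have gd: "gam mu 0 u0 \<noteq> gam mu 1 u1"
    using r0 mu_odd mu_pos m_def unfolding gam_def u1_def
    apply (cases "u0 < mu"; cases "u0 \<le> 2*mu"; cases "u0 = 2*mu+1")
    apply (simp_all split: if_splits)
    done
  show ?thesis
  proof (cases "z = gam mu 0 u0")
    case True thus ?thesis using r0 m0 by (intro bexI[of _ 0]) auto
  next
    case False
    hence "z = gam mu 1 u1" using gd assms(1) gam01[of mu 0 u0] gam01[of mu 1 u1] by auto
    thus ?thesis using r1 m1 by (intro bexI[of _ 1]) auto
  qed
qed

lemma colsurj:
  assumes "j < 3" "z \<in> {0,1}" "0 \<le> d" "d < m"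
  shows "\<exists>s\<in>{0,1}. \<exists>u. 0 \<le> u \<and> u < m \<and> zc mu j s u = z \<and> wc mu j s u = d"
proof -
  consider "j = 0" | "j = 1" | "j = 2" using assms(1) by linarith
  thus ?thesis
  proof cases
    case 1 thus ?thesis using assms by (intro bexI[of _ z]) (auto simp: zc_def wc_def)
  next
    case 2 thus ?thesis using colsurj1[OF assms(2-4)] by (simp add: zc_def wc_def m_def[symmetric])
  next
    case 3 thus ?thesis using colsurj2[OF assms(2-4)] by (simp add: zc_def wc_def m_def[symmetric])
  qed
qed

lemma pick2:
  fixes a b z :: int
  assumes "a mod 2 \<noteq> b mod 2" "z \<in> {0,1}"
  shows "a mod 2 = z \<or> b mod 2 = z"
  using assms by auto

lemma zero_dvd_neg: "(x::int) mod m = 0 \<Longrightarrow> m dvd x" by (simp add: dvd_eq_mod_eq_0)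

lemma pair01_nz:
  assumes "s \<in> {0,1}" "0 \<le> u" "u < m"
  shows "(s - beta m s u) mod 2 \<noteq> 0 \<or> (-u - 2*s) mod m \<noteq> 0"
proof (rule ccontr)
  assume "\<not> ?thesis"
  hence z: "(s - beta m s u) mod 2 = 0" and "m dvd (-u - 2*s)" by (auto simp: dvd_eq_mod_eq_0)
  from this(2) have "m dvd (u + 2*s)" by (rule negdvd) simp
  hence "u + 2*s = 0 \<or> u + 2*s = m \<or> u + 2*s = 2*m" by (rule dvd_range3[OF m_pos]) (use assms m_pos in auto)
  hence "(s = 0 \<and> u = 0) \<or> (s = 1 \<and> u = m - 2)" using assms m_pos m_def by auto
  thus False using z m_odd unfolding beta_def by auto
qed

lemma pair01_cov:
  assumes "z \<in> {0,1}" "0 \<le> d" "d < m" "z \<noteq> 0 \<or> d \<noteq> 0"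
  shows "\<exists>s\<in>{0,1}. \<exists>u. 0 \<le> u \<and> u < m \<and> (s - beta m s u) mod 2 = z \<and> (-u - 2*s) mod m = d"
proof (cases "d = 0")
  case True
  hence "z = 1" using assms by auto
  thus ?thesis using True m_pos by (intro bexI[of _ 0] exI[of _ 0]) (auto simp: beta_def)
next
  case False
  define u0 where "u0 = m - d"
  have r0: "1 \<le> u0" "u0 < m" using False assms unfolding u0_def by auto
  have m0: "(-u0 - 2*0) mod m = d"
    by (rule mod_via_dvd) (use assms in \<open>auto simp: u0_def\<close>)
  define u1 where "u1 = (if u0 \<ge> 2 then u0 - 2 else u0 - 2 + m)"
  have r1: "0 \<le> u1" "u1 < m" using r0 m_pos m_def unfolding u1_def by auto
  have e1: "-u1 - 2*1 - d = m * (if u0 \<ge> 2 then -1 else -2)"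
    unfolding u1_def u0_def by auto
  have m1: "(-u1 - 2*1) mod m = d"
    by (rule mod_via_dvd) (use assms e1 in auto)
  have bd: "beta m 0 u0 = beta m 1 u1"
    using r0 m_odd m_def unfolding beta_def u1_def by auto
  have "(0 - beta m 0 u0) mod 2 = z \<or> (1 - beta m 1 u1) mod 2 = z"
    by (rule pick2) (use bd beta01[of m 1 u1] assms(1) in auto)
  thus ?thesis
  proof
    assume "(0 - beta m 0 u0) mod 2 = z" thus ?thesis using r0 m0 by (intro bexI[of _ 0] exI[of _ u0]) auto
  next
    assume "(1 - beta m 1 u1) mod 2 = z" thus ?thesis using r1 m1 by (intro bexI[of _ 1] exI[of _ u1]) auto
  qed
qed

lemma pair02_nz:
  assumes "s \<in> {0,1}" "0 \<le> u" "u < m"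
  shows "(s - gam mu s u) mod 2 \<noteq> 0 \<or> (-2*u - mu - 2 - 2*s) mod m \<noteq> 0"
proof (rule ccontr)
  assume "\<not> ?thesis"
  hence z: "(s - gam mu s u) mod 2 = 0" and "m dvd (-2*u - mu - 2 - 2*s)" by (auto simp: dvd_eq_mod_eq_0)
  from this(2) have "m dvd (2*u + mu + 2 + 2*s)" by (rule negdvd) simp
  hence "2*u + mu + 2 + 2*s = 0 \<or> 2*u + mu + 2 + 2*s = m \<or> 2*u + mu + 2 + 2*s = 2*m"
    by (rule dvd_range3[OF m_pos]) (use assms m_def mu_pos in auto)
  hence "(s = 0 \<and> u = mu) \<or> (s = 1 \<and> u = mu - 1)" using assms mu_pos m_def mu_odd by auto presburger+
  thus False using z mu_odd mu_pos unfolding gam_def by auto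
qed

lemma pair02_cov:
  assumes "z \<in> {0,1}" "0 \<le> d" "d < m" "z \<noteq> 0 \<or> d \<noteq> 0"
  shows "\<exists>s\<in>{0,1}. \<exists>u. 0 \<le> u \<and> u < m \<and> (s - gam mu s u) mod 2 = z \<and> (-2*u - mu - 2 - 2*s) mod m = d"
proof -
  define c where "c = (3*mu+1) div 2"
  have c2: "2*c = m - 1" unfolding c_def m_def using mu_odd by presburger
  define y where "y = c * (d + mu + 2)"
  define u0 where "u0 = y mod m"
  have r0: "0 \<le> u0" "u0 < m" using m_pos unfolding u0_def by auto
  have q: "u0 = y - y div m * m" unfolding u0_def using div_mult_mod_eq[of y m] by linarith
  have e0: "-2*u0 - mu - 2 - 2*0 - d = m * (2 * (y div m) - (d + mu + 2))"
  proof -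
    have "-2*u0 - mu - 2 - 2*0 - d = -(2*c) * (d + mu + 2) + 2 * (y div m) * m - (d + mu + 2)"
      unfolding q y_def by (simp add: algebra_simps)
    also have "\<dots> = m * (2 * (y div m) - (d + mu + 2))" unfolding c2 by (simp add: algebra_simps)
    finally show ?thesis .
  qed
  have m0: "(-2*u0 - mu - 2 - 2*0) mod m = d"
    by (rule mod_via_dvd) (use assms e0 in auto)
  show ?thesis
  proof (cases "u0 = mu")
    case True
    have "m dvd (-2*u0 - mu - 2 - 2*0 - d)" using e0 by auto
    moreover have "-2*u0 - mu - 2 - 2*0 - d = - m - d" using True m_def by simp
    ultimately have "m dvd (- m - d)" by metis
    from this have "m dvd (m + d)" by (rule negdvd) simp
    hence "m dvd d" by (simp add: dvd_add_right_iff)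
    hence "d = 0" using assms(2,3) zdvd_imp_le by fastforce
    hence "z = 1" using assms by auto
    moreover have "(0 - gam mu 0 u0) mod 2 = 1" using True mu_odd mu_pos unfolding gam_def by auto
    ultimately show ?thesis using r0 m0 by (intro bexI[of _ 0]) auto
  next
    case False
    define u1 where "u1 = (if u0 = 0 then m - 1 else u0 - 1)"
    have r1: "0 \<le> u1" "u1 < m" using r0 m_pos unfolding u1_def by auto
    have e1: "-2*u1 - mu - 2 - 2*1 - d = m * (2 * (y div m) - (d + mu + 2) + (if u0 = 0 then -2 else 0))"
      using e0 unfolding u1_def by (auto simp: algebra_simps)
    have m1: "(-2*u1 - mu - 2 - 2*1) mod m = d"
      by (rule mod_via_dvd) (use assms e1 in auto)
    have gd: "gam mu 0 u0 = gam mu 1 u1"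
      using r0 False mu_odd mu_pos m_def unfolding gam_def u1_def
      apply (cases "u0 < mu"; cases "u0 \<le> 2*mu"; cases "u0 = 2*mu+1"; cases "u0 = 0")
      apply (simp_all split: if_splits)
      done
    have "(0 - gam mu 0 u0) mod 2 = z \<or> (1 - gam mu 1 u1) mod 2 = z"
      by (rule pick2) (use gd gam01[of mu 1 u1] assms(1) in auto)
    thus ?thesis
    proof
      assume "(0 - gam mu 0 u0) mod 2 = z" thus ?thesis using r0 m0 by (intro bexI[of _ 0] exI[of _ u0]) auto
    next
      assume "(1 - gam mu 1 u1) mod 2 = z" thus ?thesis using r1 m1 by (intro bexI[of _ 1] exI[of _ u1]) auto
    qed
  qed
qed

lemma pair12_nz:
  assumes "s \<in> {0,1}" "0 \<le> u" "u < m"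
  shows "(beta m s u - gam mu s u) mod 2 \<noteq> 0 \<or> (-u - mu - 2) mod m \<noteq> 0"
proof (rule ccontr)
  assume "\<not> ?thesis"
  hence z: "(beta m s u - gam mu s u) mod 2 = 0" and "m dvd (-u - mu - 2)" by (auto simp: dvd_eq_mod_eq_0)
  from this(2) have "m dvd (u + mu + 2)" by (rule negdvd) simp
  hence "u + mu + 2 = 0 \<or> u + mu + 2 = m \<or> u + mu + 2 = 2*m"
    by (rule dvd_range3[OF m_pos]) (use assms m_def mu_pos in auto)
  hence "u = 2*mu" using assms mu_pos m_def by auto
  thus False using z assms(1) mu_pos m_def unfolding gam_def beta_def by auto
qed

lemma pair12_cov:
  assumes "z \<in> {0,1}" "0 \<le> d" "d < m" "z \<noteq> 0 \<or> d \<noteq> 0"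
  shows "\<exists>s\<in>{0,1}. \<exists>u. 0 \<le> u \<and> u < m \<and> (beta m s u - gam mu s u) mod 2 = z \<and> (-u - mu - 2) mod m = d"
proof -
  define u0 where "u0 = (if d + mu + 2 \<le> m then m - (d + mu + 2) else 2*m - (d + mu + 2))"
  have r0: "0 \<le> u0" "u0 < m" using assms mu_pos m_def unfolding u0_def by auto
  have e0: "-u0 - mu - 2 - d = m * (if d + mu + 2 \<le> m then -1 else -2)"
    unfolding u0_def by auto
  have m0: "(-u0 - mu - 2) mod m = d"
    by (rule mod_via_dvd) (use assms e0 in auto)
  show ?thesis
  proof (cases "u0 = 2*mu")
    case True
    hence "d = 0" using assms m_def unfolding u0_def by (auto split: if_splits)
    hence "z = 1" using assms by auto
    moreover have "(beta m 0 u0 - gam mu 0 u0) mod 2 = 1" using True mu_odd mu_pos unfolding gam_def beta_def by auto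
    ultimately show ?thesis using r0 m0 by (intro bexI[of _ 0]) auto
  next
    case False
    have gd: "(beta m 0 u0 - gam mu 0 u0) mod 2 \<noteq> (beta m 1 u0 - gam mu 1 u0) mod 2"
      using r0 False mu_odd mu_pos m_def unfolding gam_def beta_def
      apply (cases "u0 < mu"; cases "u0 \<le> 2*mu"; cases "u0 = 3*mu+1")
      apply (simp_all split: if_splits)
      done
    have "(beta m 0 u0 - gam mu 0 u0) mod 2 = z \<or> (beta m 1 u0 - gam mu 1 u0) mod 2 = z"
      by (rule pick2) (use gd assms(1) in auto)
    thus ?thesis
    proof
      assume "(beta m 0 u0 - gam mu 0 u0) mod 2 = z" thus ?thesis using r0 m0 by (intro bexI[of _ 0] exI[of _ u0]) auto
    next
      assume "(beta m 1 u0 - gam mu 1 u0) mod 2 = z" thus ?thesis using r0 m0 by (intro bexI[of _ 1] exI[of _ u0]) auto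
    qed
  qed
qed

end


definition crt :: "int \<Rightarrow> int \<Rightarrow> int \<Rightarrow> int" where
  "crt m z w = (if w mod 2 = z then w else w + m)"

lemma crt_props:
  assumes "odd m" "0 \<le> w" "w < m" "z \<in> {0,1}"
  shows "0 \<le> crt m z w \<and> crt m z w < 2*m \<and> crt m z w mod 2 = z \<and> crt m z w mod m = w"
  using assms unfolding crt_def by auto presburger+

lemma crt2:
  fixes a b m :: int
  assumes "odd m" "m > 0" "a mod 2 = b mod 2" "a mod m = b mod m"
  shows "a mod (2*m) = b mod (2*m)"
proof -
  have "2 dvd (a - b)" using assms(3) by (simp add: mod_eq_dvd_iff)
  moreover have "m dvd (a - b)" using assms(4) by (simp add: mod_eq_dvd_iff)
  moreover have "coprime 2 m" using assms(1) by simp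
  ultimately have "2*m dvd (a-b)" by (simp add: divides_mult)
  thus ?thesis by (simp add: mod_eq_dvd_iff)
qed

lemma neg_image:
  fixes f :: "nat \<Rightarrow> int" and n :: int
  assumes "(\<lambda>i. f i mod n) ` A = {1..<n}"
  shows "(\<lambda>i. (- f i) mod n) ` A = {1..<n}"
proof
  show "(\<lambda>i. (- f i) mod n) ` A \<subseteq> {1..<n}"
  proof
    fix x assume "x \<in> (\<lambda>i. (- f i) mod n) ` A"
    then obtain i where i: "i \<in> A" "x = (- f i) mod n" by auto
    have "f i mod n \<in> {1..<n}" using assms i by blast
    thus "x \<in> {1..<n}" using i by (auto simp: zmod_zminus1_eq_if)
  qed
next
  show "{1..<n} \<subseteq> (\<lambda>i. (- f i) mod n) ` A"
  proof
    fix g assume g: "g \<in> {1..<n}"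
    hence "n - g \<in> {1..<n}" by auto
    hence "n - g \<in> (\<lambda>i. f i mod n) ` A" using assms by simp
    then obtain i where i: "i \<in> A" "f i mod n = n - g" by auto
    have "(- f i) mod n = g" using i g by (auto simp: zmod_zminus1_eq_if)
    thus "g \<in> (\<lambda>i. (- f i) mod n) ` A" using i by (auto intro: image_eqI[of _ _ i])
  qed
qed

definition Qf :: "nat \<Rightarrow> nat \<Rightarrow> nat \<Rightarrow> int" where
  "Qf mu i j = (if i < 6*mu+4 \<and> j < 3 then
     crt (3*int mu+2) (zc (int mu) j (int (i div (3*mu+2))) (int (i mod (3*mu+2))))
                      (wc (int mu) j (int (i div (3*mu+2))) (int (i mod (3*mu+2)))) else 0)"

lemma QN: "Qf mu (6*mu+4) j = 0" by (simp add: Qf_def)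
lemma Q3: "Qf mu i 3 = 0" by (simp add: Qf_def)

lemma zc01: "j < 3 \<Longrightarrow> s \<in> {0,1} \<Longrightarrow> zc mu j s u \<in> {0,1}"
  using beta01 gam01 by (auto simp: zc_def)

lemma wc_range: "0 \<le> u \<Longrightarrow> u < 3*mu+2 \<Longrightarrow> 0 \<le> wc mu j s u \<and> wc mu j s u < 3*mu+2"
  by (auto simp: wc_def)

lemma divmod_aux: "(b::nat) < K \<Longrightarrow> (a*K + b) div K = a \<and> (a*K+b) mod K = b"
  by simp

lemma wd01: "(wc mu 0 s u - wc mu 1 s u) mod (3*mu+2) = (-u - 2*s) mod (3*mu+2)"
proof -
  have "(wc mu 0 s u - wc mu 1 s u) mod (3*mu+2) = (u - (2*u+2*s)) mod (3*mu+2)"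
    by (simp add: wc_def mod_diff_right_eq)
  also have "u - (2*u+2*s) = -u - 2*s" by simp
  finally show ?thesis .
qed

lemma wd02: "(wc mu 0 s u - wc mu 2 s u) mod (3*mu+2) = (-2*u - mu - 2 - 2*s) mod (3*mu+2)"
proof -
  have "(wc mu 0 s u - wc mu 2 s u) mod (3*mu+2) = (u - (3*u+mu+2+2*s)) mod (3*mu+2)"
    by (simp add: wc_def mod_diff_right_eq)
  also have "u - (3*u+mu+2+2*s) = -2*u - mu - 2 - 2*s" by simp
  finally show ?thesis .
qed

lemma wd12: "(wc mu 1 s u - wc mu 2 s u) mod (3*mu+2) = (-u - mu - 2) mod (3*mu+2)"
proof -
  have "(wc mu 1 s u - wc mu 2 s u) mod (3*mu+2) = ((2*u+2*s) - (3*u+mu+2+2*s)) mod (3*mu+2)"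
    by (simp add: wc_def mod_diff_eq)
  also have "(2*u+2*s) - (3*u+mu+2+2*s) = -u - mu - 2" by simp
  finally show ?thesis .
qed

context
  fixes mu :: nat
  assumes mu_odd: "odd mu" and mu_pos: "mu > 0"
begin

lemma iodd: "odd (int mu)" using mu_odd by simp
lemma ipos: "int mu > 0" using mu_pos by simp
lemma Modd: "odd (3*int mu+2)" using mu_odd by simp

lemma row_facts:
  assumes "i < 6*mu+4"
  shows "int (i div (3*mu+2)) \<in> {0,1} \<and> 0 \<le> int (i mod (3*mu+2)) \<and> int (i mod (3*mu+2)) < 3*int mu+2"
proof -
  have "i div (3*mu+2) < 2" using assms by (intro less_mult_imp_div_less) simp
  hence a: "int (i div (3*mu+2)) \<in> {0,1}" by auto
  have "i mod (3*mu+2) < 3*mu+2" by simp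
  hence "int (i mod (3*mu+2)) < int (3*mu+2)" by (simp only: of_nat_less_iff)
  hence "int (i mod (3*mu+2)) < 3*int mu+2" by simp
  thus ?thesis using a by simp
qed

lemma row_exists:
  assumes "s \<in> {0,1}" "0 \<le> u" "u < 3*int mu+2"
  shows "\<exists>i < 6*mu+4. int (i div (3*mu+2)) = s \<and> int (i mod (3*mu+2)) = u"
proof -
  define k where "k = nat u"
  have u: "k < 3*mu+2" "int k = u" using assms unfolding k_def by linarith+
  from assms(1) have "s = 0 \<or> s = 1" by auto
  thus ?thesis
  proof
    assume s: "s = 0"
    have "k < 6*mu+4" "k div (3*mu+2) = 0" "k mod (3*mu+2) = k" using u by auto
    thus ?thesis using s u by (intro exI[of _ k]) auto
  next
    assume s: "s = 1"
    have "(1 * (3*mu+2) + k) div (3*mu+2) = 1 \<and> (1*(3*mu+2) + k) mod (3*mu+2) = k"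
      using divmod_aux[OF u(1)] .
    hence "(3*mu+2+k) div (3*mu+2) = 1" "(3*mu+2+k) mod (3*mu+2) = k" by simp_all
    moreover have "3*mu+2+k < 6*mu+4" using u by simp
    ultimately show ?thesis using s u by (intro exI[of _ "3*mu+2+k"]) auto
  qed
qed

lemma Q_props:
  assumes "i < 6*mu+4" "j < 3"
  shows "0 \<le> Qf mu i j \<and> Qf mu i j < 2*(3*int mu+2)
    \<and> Qf mu i j mod 2 = zc (int mu) j (int (i div (3*mu+2))) (int (i mod (3*mu+2)))
    \<and> Qf mu i j mod (3*int mu+2) = wc (int mu) j (int (i div (3*mu+2))) (int (i mod (3*mu+2)))"
proof -
  note r = row_facts[OF assms(1)]
  define s where "s = int (i div (3*mu+2))"
  define u where "u = int (i mod (3*mu+2))"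
  define z where "z = zc (int mu) j s u"
  define w where "w = wc (int mu) j s u"
  have z01: "z \<in> {0,1}" unfolding z_def using zc01[OF assms(2)] r s_def by blast
  have w: "0 \<le> w" "w < 3*int mu+2" unfolding w_def using wc_range[of u "int mu" j s] r u_def by auto
  have Q: "Qf mu i j = crt (3*int mu+2) z w"
    using assms unfolding z_def w_def s_def u_def by (simp add: Qf_def)
  show ?thesis using crt_props[OF Modd w z01] unfolding Q z_def w_def s_def u_def by blast
qed


lemma Qrest: assumes "\<not> (i < 6*mu+4 \<and> j < 3)" shows "Qf mu i j = 0"
  using assms unfolding Qf_def by (rule if_not_P)

lemma P2_pair:
  assumes j: "j < 3" "j' < 3"
  and nz: "\<And>s u. s\<in>{0,1} \<Longrightarrow> 0\<le>u \<Longrightarrow> u < 3*int mu+2 \<Longrightarrow>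
     (zc (int mu) j s u - zc (int mu) j' s u) mod 2 \<noteq> 0 \<or> (wc (int mu) j s u - wc (int mu) j' s u) mod (3*int mu+2) \<noteq> 0"
  and cov: "\<And>z d. z\<in>{0,1} \<Longrightarrow> 0\<le>d \<Longrightarrow> d < 3*int mu+2 \<Longrightarrow> z \<noteq> 0 \<or> d \<noteq> 0 \<Longrightarrow>
     \<exists>s\<in>{0,1}. \<exists>u. 0\<le>u \<and> u < 3*int mu+2 \<and> (zc (int mu) j s u - zc (int mu) j' s u) mod 2 = z
        \<and> (wc (int mu) j s u - wc (int mu) j' s u) mod (3*int mu+2) = d"
  shows "(\<lambda>i. (Qf mu i j - Qf mu i j') mod int (6*mu+4)) ` {0..<6*mu+4} = {1..<int (6*mu+4)}"
proof -
  have N: "int (6*mu+4) = 2*(3*int mu+2)" by simp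
  have Mpos: "3*int mu+2 > 0" by simp
  have key2: "(Qf mu i j - Qf mu i j') mod 2 = (zc (int mu) j (int (i div (3*mu+2))) (int (i mod (3*mu+2)))
          - zc (int mu) j' (int (i div (3*mu+2))) (int (i mod (3*mu+2)))) mod 2"
    and keyM: "(Qf mu i j - Qf mu i j') mod (3*int mu+2) = (wc (int mu) j (int (i div (3*mu+2))) (int (i mod (3*mu+2)))
          - wc (int mu) j' (int (i div (3*mu+2))) (int (i mod (3*mu+2)))) mod (3*int mu+2)"
    if "i < 6*mu+4" for i
    using Q_props[OF that j(1)] Q_props[OF that j(2)] mod_diff_eq[of "Qf mu i j" 2 "Qf mu i j'"]
      mod_diff_eq[of "Qf mu i j" "3*int mu+2" "Qf mu i j'"] by auto
  show ?thesis
  proof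
    show "(\<lambda>i. (Qf mu i j - Qf mu i j') mod int (6*mu+4)) ` {0..<6*mu+4} \<subseteq> {1..<int (6*mu+4)}"
    proof
      fix x assume "x \<in> (\<lambda>i. (Qf mu i j - Qf mu i j') mod int (6*mu+4)) ` {0..<6*mu+4}"
      then obtain i where i: "i < 6*mu+4" and x: "x = (Qf mu i j - Qf mu i j') mod int (6*mu+4)" by auto
      have x0: "0 \<le> x" "x < int (6*mu+4)" unfolding x by simp_all
      have "x \<noteq> 0"
      proof
        assume "x = 0"
        hence h: "(Qf mu i j - Qf mu i j') mod (2*(3*int mu+2)) = 0" unfolding x N .
        have "(Qf mu i j - Qf mu i j') mod 2 = ((Qf mu i j - Qf mu i j') mod (2*(3*int mu+2))) mod 2"
          by (rule mod_mod_cancel[symmetric]) (rule dvd_triv_left)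
        hence "(Qf mu i j - Qf mu i j') mod 2 = 0" using h by simp
        moreover have "(Qf mu i j - Qf mu i j') mod (3*int mu+2) = ((Qf mu i j - Qf mu i j') mod (2*(3*int mu+2))) mod (3*int mu+2)"
          by (rule mod_mod_cancel[symmetric]) (rule dvd_triv_right)
        hence "(Qf mu i j - Qf mu i j') mod (3*int mu+2) = 0" using h by simp
        ultimately show False using nz[of "int (i div (3*mu+2))" "int (i mod (3*mu+2))"] row_facts[OF i]
          key2[OF i] keyM[OF i] by auto
      qed
      thus "x \<in> {1..<int (6*mu+4)}" using x0 by auto
    qed
  next
    show "{1..<int (6*mu+4)} \<subseteq> (\<lambda>i. (Qf mu i j - Qf mu i j') mod int (6*mu+4)) ` {0..<6*mu+4}"
    proof
      fix g assume g: "g \<in> {1..<int (6*mu+4)}"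
      define z where "z = g mod 2"
      define d where "d = g mod (3*int mu+2)"
      have z01: "z \<in> {0,1}" unfolding z_def by auto
      have d: "0 \<le> d" "d < 3*int mu+2" unfolding d_def using Mpos by auto
      have zd: "z \<noteq> 0 \<or> d \<noteq> 0"
      proof (rule ccontr)
        assume "\<not> ?thesis"
        hence "g mod (2*(3*int mu+2)) = 0 mod (2*(3*int mu+2))"
          by (intro crt2[OF Modd Mpos]) (auto simp: z_def d_def)
        thus False using g N by simp
      qed
      obtain s u where su: "s\<in>{0,1}" "0\<le>u" "u < 3*int mu+2"
        "(zc (int mu) j s u - zc (int mu) j' s u) mod 2 = z"
        "(wc (int mu) j s u - wc (int mu) j' s u) mod (3*int mu+2) = d"
        using cov[OF z01 d zd] by blast
      obtain i where i: "i < 6*mu+4" "int (i div (3*mu+2)) = s" "int (i mod (3*mu+2)) = u"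
        using row_exists[OF su(1-3)] by blast
      have "(Qf mu i j - Qf mu i j') mod (2*(3*int mu+2)) = g mod (2*(3*int mu+2))"
        by (rule crt2[OF Modd Mpos]) (use key2[OF i(1)] keyM[OF i(1)] su i in \<open>auto simp: z_def d_def\<close>)
      hence "(Qf mu i j - Qf mu i j') mod int (6*mu+4) = g" using g N by simp
      thus "g \<in> (\<lambda>i. (Qf mu i j - Qf mu i j') mod int (6*mu+4)) ` {0..<6*mu+4}"
        using i by (auto intro: image_eqI[of _ _ i])
    qed
  qed
qed

lemma P2_01: "(\<lambda>i. (Qf mu i 0 - Qf mu i 1) mod int (6*mu+4)) ` {0..<6*mu+4} = {1..<int (6*mu+4)}"
proof (rule P2_pair)
  fix s u :: int assume h: "s\<in>{0,1}" "0\<le>u" "u < 3*int mu+2"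
  show "(zc (int mu) 0 s u - zc (int mu) 1 s u) mod 2 \<noteq> 0 \<or> (wc (int mu) 0 s u - wc (int mu) 1 s u) mod (3*int mu+2) \<noteq> 0"
    using pair01_nz[OF iodd ipos refl h] unfolding wd01 by (simp add: zc_def)
next
  fix z d :: int assume h: "z\<in>{0,1}" "0\<le>d" "d < 3*int mu+2" "z \<noteq> 0 \<or> d \<noteq> 0"
  show "\<exists>s\<in>{0,1}. \<exists>u. 0\<le>u \<and> u < 3*int mu+2 \<and> (zc (int mu) 0 s u - zc (int mu) 1 s u) mod 2 = z
        \<and> (wc (int mu) 0 s u - wc (int mu) 1 s u) mod (3*int mu+2) = d"
    using pair01_cov[OF iodd ipos refl h] unfolding wd01 by (simp add: zc_def)
qed simp_all

lemma P2_02: "(\<lambda>i. (Qf mu i 0 - Qf mu i 2) mod int (6*mu+4)) ` {0..<6*mu+4} = {1..<int (6*mu+4)}"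
proof (rule P2_pair)
  fix s u :: int assume h: "s\<in>{0,1}" "0\<le>u" "u < 3*int mu+2"
  show "(zc (int mu) 0 s u - zc (int mu) 2 s u) mod 2 \<noteq> 0 \<or> (wc (int mu) 0 s u - wc (int mu) 2 s u) mod (3*int mu+2) \<noteq> 0"
    using pair02_nz[OF iodd ipos refl h] unfolding wd02 by (simp add: zc_def)
next
  fix z d :: int assume h: "z\<in>{0,1}" "0\<le>d" "d < 3*int mu+2" "z \<noteq> 0 \<or> d \<noteq> 0"
  show "\<exists>s\<in>{0,1}. \<exists>u. 0\<le>u \<and> u < 3*int mu+2 \<and> (zc (int mu) 0 s u - zc (int mu) 2 s u) mod 2 = z
        \<and> (wc (int mu) 0 s u - wc (int mu) 2 s u) mod (3*int mu+2) = d"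
    using pair02_cov[OF iodd ipos refl h] unfolding wd02 by (simp add: zc_def)
qed simp_all

lemma P2_12: "(\<lambda>i. (Qf mu i 1 - Qf mu i 2) mod int (6*mu+4)) ` {0..<6*mu+4} = {1..<int (6*mu+4)}"
proof (rule P2_pair)
  fix s u :: int assume h: "s\<in>{0,1}" "0\<le>u" "u < 3*int mu+2"
  show "(zc (int mu) 1 s u - zc (int mu) 2 s u) mod 2 \<noteq> 0 \<or> (wc (int mu) 1 s u - wc (int mu) 2 s u) mod (3*int mu+2) \<noteq> 0"
    using pair12_nz[OF iodd ipos refl h] unfolding wd12 by (simp add: zc_def)
next
  fix z d :: int assume h: "z\<in>{0,1}" "0\<le>d" "d < 3*int mu+2" "z \<noteq> 0 \<or> d \<noteq> 0"
  show "\<exists>s\<in>{0,1}. \<exists>u. 0\<le>u \<and> u < 3*int mu+2 \<and> (zc (int mu) 1 s u - zc (int mu) 2 s u) mod 2 = z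
        \<and> (wc (int mu) 1 s u - wc (int mu) 2 s u) mod (3*int mu+2) = d"
    using pair12_cov[OF iodd ipos refl h] unfolding wd12 by (simp add: zc_def)
qed simp_all

lemma P2_sym:
  assumes "(\<lambda>i. (Qf mu i j - Qf mu i j') mod int (6*mu+4)) ` {0..<6*mu+4} = {1..<int (6*mu+4)}"
  shows "(\<lambda>i. (Qf mu i j' - Qf mu i j) mod int (6*mu+4)) ` {0..<6*mu+4} = {1..<int (6*mu+4)}"
  using neg_image[OF assms] by simp

lemma P2_all:
  assumes "j < 3" "j' < 3" "j \<noteq> j'"
  shows "(\<lambda>i. (Qf mu i j - Qf mu i j') mod int (6*mu+4)) ` {0..<6*mu+4} = {1..<int (6*mu+4)}"
proof -
  have "(j = 0 \<and> j' = 1) \<or> (j = 1 \<and> j' = 0) \<or> (j = 0 \<and> j' = 2) \<or> (j = 2 \<and> j' = 0)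
      \<or> (j = 1 \<and> j' = 2) \<or> (j = 2 \<and> j' = 1)" using assms by auto
  thus ?thesis using P2_01 P2_02 P2_12 P2_sym[OF P2_01] P2_sym[OF P2_02] P2_sym[OF P2_12]
    by (elim disjE conjE; simp only:)
qed

lemma colQ:
  assumes "j < 3" "0 \<le> g" "g < int (6*mu+4)"
  shows "\<exists>i < 6*mu+4. Qf mu i j = g"
proof -
  have N: "int (6*mu+4) = 2*(3*int mu+2)" by simp
  have Mpos: "3*int mu+2 > 0" by simp
  obtain s u where su: "s\<in>{0,1}" "0\<le>u" "u < 3*int mu+2" "zc (int mu) j s u = g mod 2"
      "wc (int mu) j s u = g mod (3*int mu+2)"
  proof -
    have z01: "g mod 2 \<in> {0,1}" by auto
    have d: "0 \<le> g mod (3*int mu+2)" "g mod (3*int mu+2) < 3*int mu+2" using Mpos by auto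
    show ?thesis using colsurj[OF iodd ipos refl assms(1) z01 d] that by blast
  qed
  obtain i where i: "i < 6*mu+4" "int (i div (3*mu+2)) = s" "int (i mod (3*mu+2)) = u"
    using row_exists[OF su(1-3)] by blast
  note qp = Q_props[OF i(1) assms(1)]
  have q2: "Qf mu i j mod 2 = g mod 2" using qp su(4) unfolding i(2,3) by simp
  have qM: "Qf mu i j mod (3*int mu+2) = g mod (3*int mu+2)" using qp su(5) unfolding i(2,3) by simp
  have "Qf mu i j mod (2*(3*int mu+2)) = g mod (2*(3*int mu+2))"
    by (rule crt2[OF Modd Mpos q2 qM])
  moreover have "Qf mu i j mod (2*(3*int mu+2)) = Qf mu i j" using qp by (intro mod_pos_pos_trivial) auto
  moreover have "g mod (2*(3*int mu+2)) = g" using assms N by (intro mod_pos_pos_trivial) auto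
  ultimately have "Qf mu i j = g" by simp
  thus ?thesis using i by blast
qed

end

theorem mainTheorem4:
  fixes \<mu> :: nat
  assumes "odd \<mu>" and "\<mu> > 0"
  shows "\<exists>Q. cyclic_DCA 4 (6*\<mu>+5) (6*\<mu>+4) Q \<and> DCA_normalized 4 (6*\<mu>+4) Q
             \<and> DCA_P1 4 (6*\<mu>+4) Q \<and> DCA_P2 4 (6*\<mu>+4) Q"
proof (intro exI conjI)
  let ?Q = "Qf \<mu>"
  note Qp = Q_props[OF assms]
  note P2 = P2_all[OF assms]
  note cq = colQ[OF assms]
  show "DCA_normalized 4 (6*\<mu>+4) ?Q"
    unfolding DCA_normalized_def by (simp add: Qf_def)
  show "DCA_P2 4 (6*\<mu>+4) ?Q"
    unfolding DCA_P2_def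
  proof (intro allI impI)
    fix j j' :: nat assume "j < 4" "j' < 4" and h: "j \<noteq> j' \<and> j \<noteq> 4 - 1 \<and> j' \<noteq> 4 - 1"
    hence "j < 3" "j' < 3" "j \<noteq> j'" by auto
    thus "(\<lambda>i. (?Q i j - ?Q i j') mod int (6*\<mu>+4)) ` {0..<6*\<mu>+4} = {1..<int (6*\<mu>+4)}" by (rule P2)
  qed
  show "DCA_P1 4 (6*\<mu>+4) ?Q"
    unfolding DCA_P1_def
  proof (intro allI impI)
    fix j :: nat assume j: "j < 4"
    have fin: "finite {i. i < 6*\<mu>+4+1 \<and> ?Q i j = 0}" by simp
    show "2 \<le> card {i. i < 6*\<mu>+4+1 \<and> ?Q i j = 0}"
    proof (cases "j < 3")
      case True
      obtain i0 where i0: "i0 < 6*\<mu>+4" "?Q i0 j = 0" using cq[OF True, of 0] by auto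
      have "{i0, 6*\<mu>+4} \<subseteq> {i. i < 6*\<mu>+4+1 \<and> ?Q i j = 0}" using i0 QN by auto
      hence "card {i0, 6*\<mu>+4} \<le> card {i. i < 6*\<mu>+4+1 \<and> ?Q i j = 0}" by (rule card_mono[OF fin])
      moreover have "card {i0, 6*\<mu>+4} = 2" using i0 by simp
      ultimately show ?thesis by linarith
    next
      case False
      have "j = 3" using False j by auto
      hence "{0, 6*\<mu>+4} \<subseteq> {i. i < 6*\<mu>+4+1 \<and> ?Q i j = 0}" using Q3 by auto
      hence "card {0, 6*\<mu>+4} \<le> card {i. i < 6*\<mu>+4+1 \<and> ?Q i j = 0}" by (rule card_mono[OF fin])
      moreover have "card {0::nat, 6*\<mu>+4} = 2" by simp
      ultimately show ?thesis by linarith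
    qed
  qed
  show "cyclic_DCA 4 (6*\<mu>+5) (6*\<mu>+4) ?Q"
    unfolding cyclic_DCA_def
  proof (rule conjI)
    show "\<forall>i<6*\<mu>+5. \<forall>j<4. 0 \<le> ?Q i j \<and> ?Q i j < int (6*\<mu>+4)"
    proof (intro allI impI)
      fix i j :: nat assume "i < 6*\<mu>+5" "j < 4"
      show "0 \<le> ?Q i j \<and> ?Q i j < int (6*\<mu>+4)"
      proof (cases "i < 6*\<mu>+4 \<and> j < 3")
        case True thus ?thesis using Qp[of i j] by simp
      next
        case False thus ?thesis using Qrest[OF assms False] by simp
      qed
    qed
  next
    show "\<forall>j<4. \<forall>j'<4. j \<noteq> j' \<longrightarrow> (\<forall>g\<in>{0..<int (6*\<mu>+4)}. \<exists>i<6*\<mu>+5. (?Q i j - ?Q i j') mod int (6*\<mu>+4) = g)"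
  proof (intro allI impI ballI)
    fix j j' :: nat and g :: int
    assume j: "j < 4" "j' < 4" "j \<noteq> j'" and g: "g \<in> {0..<int (6*\<mu>+4)}"
    show "\<exists>i<6*\<mu>+5. (?Q i j - ?Q i j') mod int (6*\<mu>+4) = g"
    proof (cases "j < 3 \<and> j' < 3")
      case True
      show ?thesis
      proof (cases "g = 0")
        case True
        thus ?thesis using QN by (intro exI[of _ "6*\<mu>+4"]) auto
      next
        case False
        hence "g \<in> {1..<int (6*\<mu>+4)}" using g by auto
        hence "g \<in> (\<lambda>i. (?Q i j - ?Q i j') mod int (6*\<mu>+4)) ` {0..<6*\<mu>+4}"
          using P2[of j j'] True j by simp
        then obtain i where "i < 6*\<mu>+4" "(?Q i j - ?Q i j') mod int (6*\<mu>+4) = g" by auto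
        thus ?thesis by (intro exI[of _ i]) auto
      qed
    next
      case False
      hence "(j < 3 \<and> j' = 3) \<or> (j = 3 \<and> j' < 3)" using j by auto
      thus ?thesis
      proof
        assume jj: "j < 3 \<and> j' = 3"
        obtain i where i: "i < 6*\<mu>+4" "?Q i j = g" using cq[of j g] jj g by auto
        have "?Q i j' = 0" using jj Q3 by auto
        thus ?thesis using i g by (intro exI[of _ i]) auto
      next
        assume jj: "j = 3 \<and> j' < 3"
        have "0 \<le> (-g) mod int (6*\<mu>+4)" "(-g) mod int (6*\<mu>+4) < int (6*\<mu>+4)" by simp_all
        then obtain i where i: "i < 6*\<mu>+4" "?Q i j' = (-g) mod int (6*\<mu>+4)" using cq[of j'] jj by blast
        have "?Q i j = 0" using jj Q3 by auto
        moreover have "(0 - (-g) mod int (6*\<mu>+4)) mod int (6*\<mu>+4) = g"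
          using g by (simp add: mod_minus_eq)
        ultimately show ?thesis using i by (intro exI[of _ i]) auto
      qed
    qed
  qed
qed
  qed

end
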